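(* In any execution of Algorithm $\mathsf{AG}$ (described in the context) with a guild, there exist a process $p_i$ in the maximal guild and a quorum $Q_i\in\mathcal{Q}_i$ for $p_i$ such that every process in $Q_i$ receives a $\mathrm{DistributeS}$ message from $p_i$ before it sends a $\mathrm{DistributeT}$ message.
   Context: System model: a finite set $\mathcal{P}=\{p_1,\dots,p_n\}$ of processes communicating asynchronously over authenticated point-to-point links; every message sent from a correct process to a correct process is eventually delivered. A process that follows its protocol is correct; others (faulty, Byzantine) may behave arbitrarily. $F\subseteq\mathcal{P}$ denotes the (unknown) set of faulty processes of an execution. For $\mathcal{A}\subseteq 2^{\mathcal{P}}$, write $\mathcal{A}^*=\{A' : A'\subseteq A,\ A\in\mathcal{A}\}$. An asymmetric fail-prone system is an array $\mathbb{F}=[\mathcal{F}_1,\dots,\mathcal{F}_n]$ with $\mathcal{F}_i\subseteq 2^{\mathcal{P}}$. An asymmetric Byzantine quorum system for $\mathbb{F}$ is an array $\mathbb{Q}=[\mathcal{Q}_1,\dots,\mathcal{Q}_n]$ with $\mathcal{Q}_i\subseteq 2^{\mathcal{P}}$ (quorums for $p_i$) satisfying: (consistency) for all $i,j$, all $Q_i\in\mathcal{Q}_i$, $Q_j\in\mathcal{Q}_j$, $F_{ij}\in\mathcal{F}_i^*\cap\mathcal{F}_j^*$: $Q_i\cap Q_j\not\subseteq F_{ij}$; (availability) for all $i$ and $F_i\in\mathcal{F}_i$ there is $Q_i\in\mathcal{Q}_i$ with $F_i\cap Q_i=\emptyset$. A kernel for $p_i$ is a set $K\subseteq\mathcal{P}$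 intersecting every $Q\in\mathcal{Q}_i$; $\mathcal{K}_i$ is the set of kernels for $p_i$. A correct process $p_i$ is wise if $F\in\mathcal{F}_i^*$. A guild is a set $\mathcal{G}$ of wise processes such that every $p_i\in\mathcal{G}$ has some $Q_i\in\mathcal{Q}_i$ with $Q_i\subseteq\mathcal{G}$. An execution with a guild is one in which a nonempty guild exists; the maximal guild $\mathcal{G}_{max}$ is the union of all guilds. Asymmetric reliable broadcast (arb-broadcast / arb-deliver) guarantees, in every execution with a guild: if a correct process arb-broadcasts $m$, every process of $\mathcal{G}_{max}$ eventually arb-delivers $m$; for each sender, all processes of $\mathcal{G}_{max}$ that arb-deliver from it deliver the same message; if some process of $\mathcal{G}_{max}$ arb-delivers a message from a sender, all processes of $\mathcal{G}_{max}$ eventually arb-deliver a message from that sender; a correct process arb-delivers at most one message per sender, and from a correct sender only a message it arb-broadcast. Algorithm $\mathsf{AG}$ (code of $p_i$; each correct process invokes ag-propose$(x_i)$ exactly once; each guarded "upon there being ..." action executes at most once, message handlers once per message). State: sets $S_i,T_i,U_i$ initially empty, boolean $sentT$ initially false. (1) Upon ag-propose$(x_i)$: arb-broadcast $(p_i,x_i)$. (2) Upon arb-delivering $(p_j,x_j)$ from $p_j$: $S_i\gets S_i\cup\{(p_j,x_j)\}$. (3) Upon there being $Q\in\mathcal{Q}_i$ such that for every $p_j\in Q$ some pair $(p_j,\cdot)\in S_i$: send $\langle\mathrm{DistributeS},p_i,S_i\rangle$ to all. (4) For a received $\langle\mathrm{DistributeS},p_j,S_j\rangle$: once $S_j\subseteq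 S_i$, provided $sentT$ is false at that moment, set $T_i\gets T_i\cup S_j$ and send $\langle\mathrm{Ack},p_i\rangle$ to $p_j$. (5) Upon Ack received from every member of some $Q\in\mathcal{Q}_i$: send Ready to all. (6) Upon Ready received from every member of some $Q\in\mathcal{Q}_i$: send Confirm to all. (7) Upon Confirm received from every member of some $K\in\mathcal{K}_i$: send Confirm to all. (8) Upon Confirm received from every member of some $Q\in\mathcal{Q}_i$: send $\langle\mathrm{DistributeT},p_i,T_i\rangle$ to all and set $sentT\gets$ true. (9) For a received $\langle\mathrm{DistributeT},p_j,T_j\rangle$ from $p_j$: once $T_j\subseteq S_i$, set $U_i\gets U_i\cup T_j$. (10) Upon DistributeT received from every member of some $Q\in\mathcal{Q}_i$: ag-deliver$(U_i)$. *)

theory Defs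
  imports Main
begin

text \<open>A fail-prone system Fs assigns to each process p_i its family F_i,
  a quorum system Qs assigns to each process its family of quorums Q_i.\<close>

definition star :: "'p set set \<Rightarrow> 'p set set" where
  "star A = {A'. \<exists>B\<in>A. A' \<subseteq> B}"

definition asym_quorum_system :: "('p \<Rightarrow> 'p set set) \<Rightarrow> ('p \<Rightarrow> 'p set set) \<Rightarrow> bool" where
  "asym_quorum_system Fs Qs \<longleftrightarrow>
     (\<forall>i j. \<forall>Qi\<in>Qs i. \<forall>Qj\<in>Qs j. \<forall>Fij\<in>star (Fs i) \<inter> star (Fs j). \<not> (Qi \<inter> Qj \<subseteq> Fij)) \<and>
     (\<forall>i. \<forall>Fi\<in>Fs i. \<exists>Qi\<in>Qs i. Fi \<inter> Qi = {})"

definition is_kernel :: "('p \<Rightarrow> 'p set set) \<Rightarrow> 'p \<Rightarrow> 'p set \<Rightarrow> bool" where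
  "is_kernel Qs i K \<longleftrightarrow> (\<forall>Q\<in>Qs i. K \<inter> Q \<noteq> {})"

text \<open>F is the set of faulty processes of the execution.\<close>
definition wise :: "('p \<Rightarrow> 'p set set) \<Rightarrow> 'p set \<Rightarrow> 'p \<Rightarrow> bool" where
  "wise Fs F i \<longleftrightarrow> i \<notin> F \<and> F \<in> star (Fs i)"

definition is_guild :: "('p \<Rightarrow> 'p set set) \<Rightarrow> ('p \<Rightarrow> 'p set set) \<Rightarrow> 'p set \<Rightarrow> 'p set \<Rightarrow> bool" where
  "is_guild Fs Qs F G \<longleftrightarrow> (\<forall>i\<in>G. wise Fs F i) \<and> (\<forall>i\<in>G. \<exists>Q\<in>Qs i. Q \<subseteq> G)"

definition max_guild :: "('p \<Rightarrow> 'p set set) \<Rightarrow> ('p \<Rightarrow> 'p set set) \<Rightarrow> 'p set \<Rightarrow> 'p set" where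
  "max_guild Fs Qs F = \<Union> {G. is_guild Fs Qs F G}"

text \<open>The process identifier carried inside DistributeS / DistributeT / Ack messages
  is represented by the authenticated sender of the point-to-point link.\<close>
datatype ('p, 'v) msg =
    DistS "('p \<times> 'v) set"
  | Ack
  | Ready
  | Confirm
  | DistT "('p \<times> 'v) set"

text \<open>Propose p x: ag-propose(x) at correct p, immediately arb-broadcasting (p,x) (action 1).
  ArbDeliver q j d: q arb-delivers payload d from sender j (input to action 2).
  SendS, HandleS, SendReady, SendConfirmQ, SendConfirmK, SendDistT, HandleT, AgDeliver:
  actions 3, 4, 5, 6, 7, 8, 9, 10 of correct processes.\<close>
datatype ('p, 'v) event =
    Idle
  | Propose 'p 'v
  | ArbDeliver 'p 'p "'p \<times> 'v"
  | Recv 'p 'p "('p, 'v) msg"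
  | SendS 'p
  | HandleS 'p 'p "('p \<times> 'v) set"
  | SendReady 'p
  | SendConfirmQ 'p
  | SendConfirmK 'p
  | SendDistT 'p
  | HandleT 'p 'p "('p \<times> 'v) set"
  | AgDeliver 'p "('p \<times> 'v) set"
  | FaultySend 'p 'p "('p, 'v) msg"

record ('p, 'v) lstate =
  st_S :: "('p \<times> 'v) set"
  st_T :: "('p \<times> 'v) set"
  st_U :: "('p \<times> 'v) set"
  st_sentT :: bool
  st_proposed :: bool
  st_sentS :: bool
  st_sentReady :: bool
  st_conf6 :: bool
  st_conf7 :: bool
  st_delivered :: bool
  st_rcv :: "('p \<times> ('p, 'v) msg) set"      (* messages received so far, with sender *)
  st_pendS :: "('p \<times> ('p \<times> 'v) set) set"
  st_pendT :: "('p \<times> ('p \<times> 'v) set) set"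

record ('p, 'v) config =
  cf_ls :: "'p \<Rightarrow> ('p, 'v) lstate"
  cf_sent :: "('p \<times> 'p \<times> ('p, 'v) msg) set"   (* (sender, receiver, message) ever sent *)
  cf_arbB :: "('p \<times> ('p \<times> 'v)) set"          (* (sender, payload) ever arb-broadcast *)

definition init_lstate :: "('p, 'v) lstate" where
  "init_lstate = \<lparr> st_S = {}, st_T = {}, st_U = {}, st_sentT = False, st_proposed = False,
     st_sentS = False, st_sentReady = False, st_conf6 = False, st_conf7 = False,
     st_delivered = False, st_rcv = {}, st_pendS = {}, st_pendT = {} \<rparr>"

definition init_config :: "('p, 'v) config" where
  "init_config = \<lparr> cf_ls = (\<lambda>_. init_lstate), cf_sent = {}, cf_arbB = {} \<rparr>"

definition upd_ls :: "'p \<Rightarrow> (('p,'v) lstate \<Rightarrow> ('p,'v) lstate) \<Rightarrow> ('p,'v) config \<Rightarrow> ('p,'v) config" where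
  "upd_ls p f c = c\<lparr> cf_ls := (cf_ls c)(p := f (cf_ls c p)) \<rparr>"

definition send_all :: "'p \<Rightarrow> ('p,'v) msg \<Rightarrow> ('p,'v) config \<Rightarrow> ('p,'v) config" where
  "send_all p m c = c\<lparr> cf_sent := cf_sent c \<union> {(p, q, m) | q. True} \<rparr>"

definition send_to :: "'p \<Rightarrow> 'p \<Rightarrow> ('p,'v) msg \<Rightarrow> ('p,'v) config \<Rightarrow> ('p,'v) config" where
  "send_to p q m c = c\<lparr> cf_sent := insert (p, q, m) (cf_sent c) \<rparr>"

definition ag_step :: "('p \<Rightarrow> 'p set set) \<Rightarrow> 'p set \<Rightarrow> ('p,'v) config \<Rightarrow> ('p,'v) event \<Rightarrow> ('p,'v) config \<Rightarrow> bool" where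
  "ag_step Qs F c e c' = (case e of
     Idle \<Rightarrow> c' = c
   | Propose p x \<Rightarrow> p \<notin> F \<and> \<not> st_proposed (cf_ls c p) \<and>
        c' = (upd_ls p (\<lambda>s. s\<lparr> st_proposed := True \<rparr>) c)\<lparr> cf_arbB := insert (p, (p, x)) (cf_arbB c) \<rparr>
   | ArbDeliver p j d \<Rightarrow> p \<notin> F \<and>
        c' = upd_ls p (\<lambda>s. if fst d = j then s\<lparr> st_S := insert d (st_S s) \<rparr> else s) c
   | Recv p j m \<Rightarrow> p \<notin> F \<and> (j, p, m) \<in> cf_sent c \<and> (j, m) \<notin> st_rcv (cf_ls c p) \<and>
        c' = upd_ls p (\<lambda>s. s\<lparr> st_rcv := insert (j, m) (st_rcv s),
                            st_pendS := (case m of DistS X \<Rightarrow> insert (j, X) (st_pendS s) | _ \<Rightarrow> st_pendS s),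
                            st_pendT := (case m of DistT X \<Rightarrow> insert (j, X) (st_pendT s) | _ \<Rightarrow> st_pendT s) \<rparr>) c
   | SendS p \<Rightarrow> p \<notin> F \<and> \<not> st_sentS (cf_ls c p) \<and>
        (\<exists>Q\<in>Qs p. \<forall>j\<in>Q. \<exists>x. (j, x) \<in> st_S (cf_ls c p)) \<and>
        c' = send_all p (DistS (st_S (cf_ls c p))) (upd_ls p (\<lambda>s. s\<lparr> st_sentS := True \<rparr>) c)
   | HandleS p j X \<Rightarrow> p \<notin> F \<and> (j, X) \<in> st_pendS (cf_ls c p) \<and> X \<subseteq> st_S (cf_ls c p) \<and>
        c' = (if st_sentT (cf_ls c p)
              then upd_ls p (\<lambda>s. s\<lparr> st_pendS := st_pendS s - {(j, X)} \<rparr>) c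
              else send_to p j Ack
                     (upd_ls p (\<lambda>s. s\<lparr> st_pendS := st_pendS s - {(j, X)}, st_T := st_T s \<union> X \<rparr>) c))
   | SendReady p \<Rightarrow> p \<notin> F \<and> \<not> st_sentReady (cf_ls c p) \<and>
        (\<exists>Q\<in>Qs p. \<forall>j\<in>Q. (j, Ack) \<in> st_rcv (cf_ls c p)) \<and>
        c' = send_all p Ready (upd_ls p (\<lambda>s. s\<lparr> st_sentReady := True \<rparr>) c)
   | SendConfirmQ p \<Rightarrow> p \<notin> F \<and> \<not> st_conf6 (cf_ls c p) \<and>
        (\<exists>Q\<in>Qs p. \<forall>j\<in>Q. (j, Ready) \<in> st_rcv (cf_ls c p)) \<and>
        c' = send_all p Confirm (upd_ls p (\<lambda>s. s\<lparr> st_conf6 := True \<rparr>) c)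
   | SendConfirmK p \<Rightarrow> p \<notin> F \<and> \<not> st_conf7 (cf_ls c p) \<and>
        (\<exists>K. is_kernel Qs p K \<and> (\<forall>j\<in>K. (j, Confirm) \<in> st_rcv (cf_ls c p))) \<and>
        c' = send_all p Confirm (upd_ls p (\<lambda>s. s\<lparr> st_conf7 := True \<rparr>) c)
   | SendDistT p \<Rightarrow> p \<notin> F \<and> \<not> st_sentT (cf_ls c p) \<and>
        (\<exists>Q\<in>Qs p. \<forall>j\<in>Q. (j, Confirm) \<in> st_rcv (cf_ls c p)) \<and>
        c' = send_all p (DistT (st_T (cf_ls c p))) (upd_ls p (\<lambda>s. s\<lparr> st_sentT := True \<rparr>) c)
   | HandleT p j X \<Rightarrow> p \<notin> F \<and> (j, X) \<in> st_pendT (cf_ls c p) \<and> X \<subseteq> st_S (cf_ls c p) \<and>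
        c' = upd_ls p (\<lambda>s. s\<lparr> st_pendT := st_pendT s - {(j, X)}, st_U := st_U s \<union> X \<rparr>) c
   | AgDeliver p V \<Rightarrow> p \<notin> F \<and> \<not> st_delivered (cf_ls c p) \<and>
        (\<exists>Q\<in>Qs p. \<forall>j\<in>Q. \<exists>X. (j, DistT X) \<in> st_rcv (cf_ls c p)) \<and>
        V = st_U (cf_ls c p) \<and>
        c' = upd_ls p (\<lambda>s. s\<lparr> st_delivered := True \<rparr>) c
   | FaultySend j q m \<Rightarrow> j \<in> F \<and> c' = send_to j q m c)"

definition local_action :: "'p \<Rightarrow> ('p,'v) event \<Rightarrow> bool" where
  "local_action p e \<longleftrightarrow> e = SendS p \<or> (\<exists>j X. e = HandleS p j X) \<or> e = SendReady p \<or>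
     e = SendConfirmQ p \<or> e = SendConfirmK p \<or> e = SendDistT p \<or> (\<exists>j X. e = HandleT p j X) \<or>
     (\<exists>V. e = AgDeliver p V)"

definition same_action :: "('p,'v) event \<Rightarrow> ('p,'v) event \<Rightarrow> bool" where
  "same_action e e' \<longleftrightarrow> (case e of AgDeliver p V \<Rightarrow> (\<exists>V'. e' = AgDeliver p V') | _ \<Rightarrow> e' = e)"

definition ag_execution :: "('p \<Rightarrow> 'p set set) \<Rightarrow> ('p \<Rightarrow> 'p set set) \<Rightarrow> 'p set
    \<Rightarrow> (nat \<Rightarrow> ('p,'v) event) \<Rightarrow> (nat \<Rightarrow> ('p,'v) config) \<Rightarrow> bool" where
  "ag_execution Fs Qs F tr cs \<longleftrightarrow>
     cs 0 = init_config \<and>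
     (\<forall>t. ag_step Qs F (cs t) (tr t) (cs (Suc t))) \<and>
     \<comment> \<open>every correct process invokes ag-propose\<close>
     (\<forall>p. p \<notin> F \<longrightarrow> (\<exists>t x. tr t = Propose p x)) \<and>
     \<comment> \<open>reliable links between correct processes\<close>
     (\<forall>t j p m. j \<notin> F \<longrightarrow> p \<notin> F \<longrightarrow> (j, p, m) \<in> cf_sent (cs t) \<longrightarrow> (\<exists>t'. tr t' = Recv p j m)) \<and>
     \<comment> \<open>weak fairness of enabled actions of correct processes\<close>
     (\<forall>t p e. p \<notin> F \<longrightarrow> local_action p e \<longrightarrow> (\<exists>c'. ag_step Qs F (cs t) e c') \<longrightarrow>
        (\<exists>t'\<ge>t. same_action e (tr t'))) \<and>
     \<comment> \<open>arb-broadcast: validity\<close>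
     (\<forall>t j d. j \<notin> F \<longrightarrow> (j, d) \<in> cf_arbB (cs t) \<longrightarrow>
        (\<forall>p\<in>max_guild Fs Qs F. \<exists>t'. tr t' = ArbDeliver p j d)) \<and>
     \<comment> \<open>arb-broadcast: consistency\<close>
     (\<forall>t t' p q j d d'. p \<in> max_guild Fs Qs F \<longrightarrow> q \<in> max_guild Fs Qs F \<longrightarrow>
        tr t = ArbDeliver p j d \<longrightarrow> tr t' = ArbDeliver q j d' \<longrightarrow> d = d') \<and>
     \<comment> \<open>arb-broadcast: totality\<close>
     (\<forall>t p j d. p \<in> max_guild Fs Qs F \<longrightarrow> tr t = ArbDeliver p j d \<longrightarrow>
        (\<forall>q\<in>max_guild Fs Qs F. \<exists>t' d'. tr t' = ArbDeliver q j d')) \<and>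
     \<comment> \<open>arb-broadcast: no duplication\<close>
     (\<forall>t t' p j d d'. p \<notin> F \<longrightarrow> tr t = ArbDeliver p j d \<longrightarrow> tr t' = ArbDeliver p j d' \<longrightarrow> t = t') \<and>
     \<comment> \<open>arb-broadcast: integrity\<close>
     (\<forall>t p j d. p \<notin> F \<longrightarrow> j \<notin> F \<longrightarrow> tr t = ArbDeliver p j d \<longrightarrow> (j, d) \<in> cf_arbB (cs t))"

end

theory Submission
  imports Defs
begin

definition orig :: "'p \<Rightarrow> 'p \<Rightarrow> ('p,'v) msg \<Rightarrow> ('p,'v) event \<Rightarrow> ('p,'v) config \<Rightarrow> bool" where
  "orig j p m e c = (case m of Ack \<Rightarrow> (\<exists>X. e = HandleS j p X \<and> \<not> st_sentT (cf_ls c j))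
     | Ready \<Rightarrow> e = SendReady j | Confirm \<Rightarrow> (e = SendConfirmQ j \<or> e = SendConfirmK j) | _ \<Rightarrow> True)"

lemma step_sent_mono: "ag_step Qs F c e c' \<Longrightarrow> cf_sent c \<subseteq> cf_sent c'"
  by (cases e) (auto simp: ag_step_def upd_ls_def send_all_def send_to_def split: if_splits)

lemma step_sent_new: "ag_step Qs F c e c' \<Longrightarrow> (j,p,m) \<in> cf_sent c' \<Longrightarrow> (j,p,m) \<notin> cf_sent c
  \<Longrightarrow> j \<notin> F \<Longrightarrow> orig j p m e c"
  by (cases e) (auto simp: ag_step_def upd_ls_def send_all_def send_to_def orig_def split: if_splits)

lemma step_rcv: "ag_step Qs F c e c' \<Longrightarrow> (j,m) \<in> st_rcv (cf_ls c' p) \<Longrightarrow>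
   (j,m) \<in> st_rcv (cf_ls c p) \<or> (j,p,m) \<in> cf_sent c"
  by (cases e) (auto simp: ag_step_def upd_ls_def send_all_def send_to_def split: if_splits)

lemma step_pendS: "ag_step Qs F c e c' \<Longrightarrow> (j,X) \<in> st_pendS (cf_ls c' p) \<Longrightarrow>
   (j,X) \<in> st_pendS (cf_ls c p) \<or> e = Recv p j (DistS X)"
  by (cases e) (auto simp: ag_step_def upd_ls_def send_all_def send_to_def split: if_splits msg.splits)

lemma step_sentT: "ag_step Qs F c e c' \<Longrightarrow> st_sentT (cf_ls c p) \<Longrightarrow> st_sentT (cf_ls c' p)"
  by (cases e) (auto simp: ag_step_def upd_ls_def send_all_def send_to_def split: if_splits)

lemma step_S: "ag_step Qs F c e c' \<Longrightarrow> st_S (cf_ls c p) \<subseteq> st_S (cf_ls c' p)"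
  by (cases e) (auto simp: ag_step_def upd_ls_def send_all_def send_to_def split: if_splits)

lemma step_sentS: "ag_step Qs F c e c' \<Longrightarrow> st_sentS (cf_ls c' p) \<Longrightarrow>
   st_sentS (cf_ls c p) \<or> (\<forall>q. (p,q,DistS (st_S (cf_ls c p))) \<in> cf_sent c')"
  by (cases e) (auto simp: ag_step_def upd_ls_def send_all_def send_to_def split: if_splits)

locale run =
  fixes Qs :: "'p \<Rightarrow> 'p set set" and F :: "'p set"
    and tr :: "nat \<Rightarrow> ('p, 'v) event" and cs :: "nat \<Rightarrow> ('p, 'v) config"
  assumes init: "cs 0 = init_config"
    and steps: "\<And>t. ag_step Qs F (cs t) (tr t) (cs (Suc t))"
begin

lemma sent_mono: "t \<le> t' \<Longrightarrow> cf_sent (cs t) \<subseteq> cf_sent (cs t')"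
  by (rule lift_Suc_mono_le[of "\<lambda>t. cf_sent (cs t)"]) (use step_sent_mono[OF steps] in blast)

lemma sentT_mono: "t \<le> t' \<Longrightarrow> st_sentT (cf_ls (cs t) p) \<Longrightarrow> st_sentT (cf_ls (cs t') p)"
  by (induction t' rule: dec_induct) (auto intro: step_sentT[OF steps])

lemma S_mono: "t \<le> t' \<Longrightarrow> st_S (cf_ls (cs t) p) \<subseteq> st_S (cf_ls (cs t') p)"
  by (rule lift_Suc_mono_le[of "\<lambda>t. st_S (cf_ls (cs t) p)"]) (use step_S[OF steps] in blast)

lemma sent_origin: "(j,p,m) \<in> cf_sent (cs t) \<Longrightarrow> j \<notin> F \<Longrightarrow> \<exists>t'<t. orig j p m (tr t') (cs t')"
proof (induction t)
  case 0 then show ?case by (simp add: init init_config_def)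
next
  case (Suc t)
  show ?case
  proof (cases "(j,p,m) \<in> cf_sent (cs t)")
    case True then show ?thesis using Suc by (meson less_SucI)
  next
    case False then show ?thesis using step_sent_new[OF steps Suc.prems(1) False Suc.prems(2)] by blast
  qed
qed

lemma rcv_sent: "(j,m) \<in> st_rcv (cf_ls (cs t) p) \<Longrightarrow> (j,p,m) \<in> cf_sent (cs t)"
proof (induction t)
  case 0 then show ?case by (simp add: init init_config_def init_lstate_def)
next
  case (Suc t)
  then show ?case using step_rcv[OF steps Suc.prems] step_sent_mono[OF steps] by blast
qed

lemma pendS_recv: "(j,X) \<in> st_pendS (cf_ls (cs t) p) \<Longrightarrow> \<exists>t'<t. tr t' = Recv p j (DistS X)"
proof (induction t)
  case 0 then show ?case by (simp add: init init_config_def init_lstate_def)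
next
  case (Suc t)
  then show ?case using step_pendS[OF steps Suc.prems] by (meson less_SucI lessI)
qed

lemma sentS_sent: "st_sentS (cf_ls (cs t) p) \<Longrightarrow> \<exists>X. \<forall>q. (p,q,DistS X) \<in> cf_sent (cs t)"
proof (induction t)
  case 0 then show ?case by (simp add: init init_config_def init_lstate_def)
next
  case (Suc t)
  then show ?case using step_sentS[OF steps Suc.prems] step_sent_mono[OF steps] by blast
qed

end


lemma mg_props:
  assumes "h \<in> max_guild Fs Qs F"
  shows "h \<notin> F" "F \<in> star (Fs h)" "\<exists>Q\<in>Qs h. Q \<subseteq> max_guild Fs Qs F"
proof -
  obtain G where G: "is_guild Fs Qs F G" "h \<in> G" using assms by (auto simp: max_guild_def)
  then show "h \<notin> F" "F \<in> star (Fs h)" by (auto simp: is_guild_def wise_def)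
  from G obtain Q where "Q \<in> Qs h" "Q \<subseteq> G" by (auto simp: is_guild_def)
  moreover have "G \<subseteq> max_guild Fs Qs F" using G by (auto simp: max_guild_def)
  ultimately show "\<exists>Q\<in>Qs h. Q \<subseteq> max_guild Fs Qs F" by blast
qed

lemma mg_inter:
  assumes "asym_quorum_system Fs Qs" "h \<in> max_guild Fs Qs F" "Q \<in> Qs h"
  shows "\<exists>x\<in>Q. x \<in> max_guild Fs Qs F"
proof -
  obtain Q' where Q': "Q' \<in> Qs h" "Q' \<subseteq> max_guild Fs Qs F" using mg_props(3)[OF assms(2)] by blast
  have "F \<in> star (Fs h) \<inter> star (Fs h)" using mg_props(2)[OF assms(2)] by simp
  then have "\<not> (Q \<inter> Q' \<subseteq> F)" using assms(1) assms(3) Q'(1) unfolding asym_quorum_system_def by blast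
  then show ?thesis using Q'(2) by blast
qed

lemma finite_common_time:
  fixes P :: "'a \<Rightarrow> nat \<Rightarrow> bool"
  assumes "finite A" "\<forall>j\<in>A. \<exists>t. \<forall>t'\<ge>t. P j t'"
  shows "\<exists>T. \<forall>j\<in>A. P j T"
proof -
  have "\<exists>T. \<forall>j\<in>A. \<forall>t'\<ge>T. P j t'" using assms
  proof (induction A rule: finite_induct)
    case empty then show ?case by simp
  next
    case (insert a A)
    then obtain T where T: "\<forall>j\<in>A. \<forall>t'\<ge>T. P j t'" by auto
    obtain Ta where Ta: "\<forall>t'\<ge>Ta. P a t'" using insert.prems by auto
    have "\<forall>j\<in>insert a A. \<forall>t'\<ge>max T Ta. P j t'"
    proof (intro ballI allI impI)
      fix j t' assume "j \<in> insert a A" "max T Ta \<le> t'"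
      then show "P j t'" using T Ta by (metis insert_iff max.bounded_iff)
    qed
    then show ?case by blast
  qed
  then show ?thesis by blast
qed

theorem lemma3p5:
  fixes Fs Qs :: "'p::finite \<Rightarrow> 'p set set"
    and F :: "'p set"
    and tr :: "nat \<Rightarrow> ('p, 'v) event"
    and cs :: "nat \<Rightarrow> ('p, 'v) config"
  assumes "asym_quorum_system Fs Qs"
    and "ag_execution Fs Qs F tr cs"
    and "\<exists>G. G \<noteq> {} \<and> is_guild Fs Qs F G"
  shows "\<exists>i\<in>max_guild Fs Qs F. \<exists>Qi\<in>Qs i. \<forall>q\<in>Qi. q \<notin> F \<longrightarrow>
           (\<exists>t X. tr t = Recv q i (DistS X) \<and> (\<forall>t'. tr t' = SendDistT q \<longrightarrow> t < t'))"
proof -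
  let ?M = "max_guild Fs Qs F"
  note ex = assms(2)[unfolded ag_execution_def]
  interpret run Qs F tr cs using ex by unfold_locales auto
  have propo: "\<And>p. p \<notin> F \<Longrightarrow> \<exists>t x. tr t = Propose p x" using ex[THEN conjunct2, THEN conjunct2, THEN conjunct1] by blast
  have links: "\<And>t j p m. j \<notin> F \<Longrightarrow> p \<notin> F \<Longrightarrow> (j, p, m) \<in> cf_sent (cs t) \<Longrightarrow> \<exists>t'. tr t' = Recv p j m"
    using ex[THEN conjunct2, THEN conjunct2, THEN conjunct2, THEN conjunct1] by blast
  have fair: "\<And>t p e. p \<notin> F \<Longrightarrow> local_action p e \<Longrightarrow> (\<exists>c'. ag_step Qs F (cs t) e c') \<Longrightarrow>
        (\<exists>t'\<ge>t. same_action e (tr t'))"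
    using ex[THEN conjunct2, THEN conjunct2, THEN conjunct2, THEN conjunct2, THEN conjunct1] by blast
  have valid: "\<And>t j d p. j \<notin> F \<Longrightarrow> (j, d) \<in> cf_arbB (cs t) \<Longrightarrow> p \<in> ?M \<Longrightarrow> \<exists>t'. tr t' = ArbDeliver p j d"
    using ex[THEN conjunct2, THEN conjunct2, THEN conjunct2, THEN conjunct2, THEN conjunct2, THEN conjunct1] by blast
  show ?thesis
  proof (cases "\<exists>g\<in>?M. \<exists>s. tr s = SendDistT g")
    case True
    then obtain g s where g: "g \<in> ?M" "tr s = SendDistT g" by blast
    define P where "P t \<longleftrightarrow> (\<exists>h\<in>?M. tr t = SendConfirmQ h \<or> tr t = SendConfirmK h)" for t
    have conf_P: "\<exists>t'<t. P t'" if "h \<in> ?M" "(h, Confirm) \<in> st_rcv (cf_ls (cs t) p)" for h t p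
    proof -
      have "(h,p,Confirm) \<in> cf_sent (cs t)" using rcv_sent that(2) by blast
      from sent_origin[OF this mg_props(1)[OF that(1)]] show ?thesis
        using that(1) by (auto simp: orig_def P_def)
    qed
    have "\<exists>t. P t"
    proof -
      have st: "ag_step Qs F (cs s) (SendDistT g) (cs (Suc s))" using steps[of s] g(2) by simp
      then obtain Q where Q: "Q \<in> Qs g" "\<forall>j\<in>Q. (j, Confirm) \<in> st_rcv (cf_ls (cs s) g)"
        by (auto simp: ag_step_def)
      obtain h where "h \<in> Q" "h \<in> ?M" using mg_inter[OF assms(1) g(1) Q(1)] by blast
      then show ?thesis using conf_P Q(2) by blast
    qed
    define t1 where "t1 = (LEAST t. P t)"
    have Pt1: "P t1" unfolding t1_def using \<open>\<exists>t. P t\<close> by (meson LeastI_ex)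
    have min: "\<not> P t" if "t < t1" for t using not_less_Least[of t P] that unfolding t1_def by simp
    then obtain h where h: "h \<in> ?M" "tr t1 = SendConfirmQ h \<or> tr t1 = SendConfirmK h"
      using Pt1 P_def by blast
    have "tr t1 = SendConfirmQ h"
    proof (rule ccontr)
      assume "tr t1 \<noteq> SendConfirmQ h"
      then have "tr t1 = SendConfirmK h" using h by blast
      then have "ag_step Qs F (cs t1) (SendConfirmK h) (cs (Suc t1))" using steps[of t1] by simp
      then obtain K where K: "is_kernel Qs h K" "\<forall>j\<in>K. (j, Confirm) \<in> st_rcv (cf_ls (cs t1) h)"
        by (auto simp: ag_step_def)
      obtain Q' where Q': "Q' \<in> Qs h" "Q' \<subseteq> ?M" using mg_props(3)[OF h(1)] by blast
      then obtain h' where "h' \<in> K" "h' \<in> ?M" using K(1) unfolding is_kernel_def by blast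
      then show False using conf_P K(2) min by blast
    qed
    then have "ag_step Qs F (cs t1) (SendConfirmQ h) (cs (Suc t1))" using steps[of t1] by simp
    then obtain Q where Q: "Q \<in> Qs h" "\<forall>j\<in>Q. (j, Ready) \<in> st_rcv (cf_ls (cs t1) h)"
      by (auto simp: ag_step_def)
    obtain r where r: "r \<in> Q" "r \<in> ?M" using mg_inter[OF assms(1) h(1) Q(1)] by blast
    have "(r,h,Ready) \<in> cf_sent (cs t1)" using rcv_sent Q(2) r(1) by blast
    from sent_origin[OF this mg_props(1)[OF r(2)]] obtain t2 where "tr t2 = SendReady r"
      by (auto simp: orig_def)
    then have "ag_step Qs F (cs t2) (SendReady r) (cs (Suc t2))" using steps[of t2] by simp
    then obtain Qr where Qr: "Qr \<in> Qs r" "\<forall>j\<in>Qr. (j, Ack) \<in> st_rcv (cf_ls (cs t2) r)"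
      by (auto simp: ag_step_def)
    have "\<forall>q\<in>Qr. q \<notin> F \<longrightarrow>
           (\<exists>t X. tr t = Recv q r (DistS X) \<and> (\<forall>t'. tr t' = SendDistT q \<longrightarrow> t < t'))"
    proof (intro ballI impI)
      fix q assume q: "q \<in> Qr" "q \<notin> F"
      have "(q,r,Ack) \<in> cf_sent (cs t2)" using rcv_sent Qr(2) q(1) by blast
      from sent_origin[OF this q(2)] obtain ta X where
        ta: "tr ta = HandleS q r X" "\<not> st_sentT (cf_ls (cs ta) q)"
        by (auto simp: orig_def)
      then have "ag_step Qs F (cs ta) (HandleS q r X) (cs (Suc ta))" using steps[of ta] by simp
      then have "(r, X) \<in> st_pendS (cf_ls (cs ta) q)" by (auto simp: ag_step_def)
      then obtain t where t: "t < ta" "tr t = Recv q r (DistS X)" using pendS_recv by blast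
      have "t < t'" if "tr t' = SendDistT q" for t'
      proof -
        have "ag_step Qs F (cs t') (SendDistT q) (cs (Suc t'))" using steps[of t'] that by simp
        then have sT: "st_sentT (cf_ls (cs (Suc t')) q)" by (auto simp: ag_step_def upd_ls_def send_all_def)
        have "t' \<noteq> ta" using that ta(1) by auto
        moreover have "\<not> t' < ta"
        proof
          assume "t' < ta"
          then have "Suc t' \<le> ta" by simp
          from sentT_mono[OF this sT] ta(2) show False by simp
        qed
        ultimately show ?thesis using t(1) by simp
      qed
      then show "\<exists>t X. tr t = Recv q r (DistS X) \<and> (\<forall>t'. tr t' = SendDistT q \<longrightarrow> t < t')"
        using t(2) by blast
    qed
    then show ?thesis using r(2) Qr(1) by blast
  next
    case False
    obtain G where G: "G \<noteq> {}" "is_guild Fs Qs F G" using assms(3) by blast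
    obtain i where i: "i \<in> G" using G(1) by blast
    have GM: "G \<subseteq> ?M" using G(2) by (auto simp: max_guild_def)
    obtain Qi where Qi: "Qi \<in> Qs i" "Qi \<subseteq> G" using G(2) i by (auto simp: is_guild_def)
    have iM: "i \<in> ?M" using i GM by blast
    have QiM: "Qi \<subseteq> ?M" using Qi GM by blast
    have "\<forall>j\<in>Qi. \<exists>t. \<forall>t'\<ge>t. \<exists>x. (j, x) \<in> st_S (cf_ls (cs t') i)"
    proof
      fix j assume j: "j \<in> Qi"
      have jF: "j \<notin> F" by (rule mg_props(1)) (use QiM j in blast)
      obtain tp x where tp: "tr tp = Propose j x" using propo[OF jF] by blast
      then have "ag_step Qs F (cs tp) (Propose j x) (cs (Suc tp))" using steps[of tp] by simp
      then have "(j, (j,x)) \<in> cf_arbB (cs (Suc tp))" by (auto simp: ag_step_def upd_ls_def)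
      then obtain td where td: "tr td = ArbDeliver i j (j,x)" using valid[OF jF _ iM] by blast
      then have "ag_step Qs F (cs td) (ArbDeliver i j (j,x)) (cs (Suc td))" using steps[of td] by simp
      then have "(j,x) \<in> st_S (cf_ls (cs (Suc td)) i)" by (auto simp: ag_step_def upd_ls_def)
      then show "\<exists>t. \<forall>t'\<ge>t. \<exists>x. (j, x) \<in> st_S (cf_ls (cs t') i)" using S_mono by blast
    qed
    from finite_common_time[OF finite this] obtain T where
      T: "\<forall>j\<in>Qi. \<exists>x. (j, x) \<in> st_S (cf_ls (cs T) i)" by blast
    have iF: "i \<notin> F" using mg_props(1)[OF iM] .
    have "\<exists>t X. \<forall>q. (i,q,DistS X) \<in> cf_sent (cs t)"
    proof (cases "st_sentS (cf_ls (cs T) i)")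
      case True then show ?thesis using sentS_sent by blast
    next
      case False
      have "ag_step Qs F (cs T) (SendS i)
              (send_all i (DistS (st_S (cf_ls (cs T) i))) (upd_ls i (\<lambda>s. s\<lparr> st_sentS := True \<rparr>) (cs T)))"
        using False T Qi(1) iF by (auto simp: ag_step_def)
      then obtain t' where "tr t' = SendS i"
        using fair[OF iF, of "SendS i" T] by (auto simp: local_action_def same_action_def)
      then have "ag_step Qs F (cs t') (SendS i) (cs (Suc t'))" using steps[of t'] by simp
      then have "\<forall>q. (i,q,DistS (st_S (cf_ls (cs t') i))) \<in> cf_sent (cs (Suc t'))"
        by (auto simp: ag_step_def send_all_def upd_ls_def)
      then show ?thesis by blast
    qed
    then obtain ts X where X: "\<forall>q. (i,q,DistS X) \<in> cf_sent (cs ts)" by blast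
    have "\<forall>q\<in>Qi. q \<notin> F \<longrightarrow>
           (\<exists>t X. tr t = Recv q i (DistS X) \<and> (\<forall>t'. tr t' = SendDistT q \<longrightarrow> t < t'))"
    proof (intro ballI impI)
      fix q assume q: "q \<in> Qi" "q \<notin> F"
      obtain t where "tr t = Recv q i (DistS X)" using links[OF iF q(2)] X by blast
      moreover have "\<forall>t'. tr t' \<noteq> SendDistT q" using False q(1) QiM by blast
      ultimately show "\<exists>t X. tr t = Recv q i (DistS X) \<and> (\<forall>t'. tr t' = SendDistT q \<longrightarrow> t < t')"
        by blast
    qed
    then show ?thesis using iM Qi(1) by blast
  qed
qed

end
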